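(* There is a group $G$ together with a paradoxical action of $G$ on $\mathbb{R}$ such that for every $G$-selector $A$ (i.e. every $G$-Vitali set), the set $\mathbb{R}_A$ is not Lebesgue measurable.
   Context: Given a group $G$ acting on $\mathbb{R}$, a set $S\subseteq\mathbb{R}$ is a $G$-selector if for every $x\in\mathbb{R}$ there are $v\in S$ and $g\in G$ with $g\cdot x=v$, and for distinct $x,y\in S$ there is no $g\in G$ with $g\cdot x=y$. The action is paradoxical if every $G$-selector is not Lebesgue measurable; in that case selectors are called $G$-Vitali sets. For $A\subseteq\mathbb{R}$, $\mathbb{R}_A$ is the set of all reals Turing equivalent to some element of $A$. *)

theory Defs
  imports "HOL-Analysis.Analysis" "HOL-Algebra.Group_Action" "HOL-Library.Nat_Bijection"
begin

definition is_selector :: "('g, 'm) monoid_scheme \<Rightarrow> ('g \<Rightarrow> real \<Rightarrow> real) \<Rightarrow> real set \<Rightarrow> bool" where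
  "is_selector G \<phi> S \<longleftrightarrow>
     (\<forall>x::real. \<exists>v\<in>S. \<exists>g\<in>carrier G. \<phi> g x = v) \<and>
     (\<forall>x\<in>S. \<forall>y\<in>S. x \<noteq> y \<longrightarrow> \<not> (\<exists>g\<in>carrier G. \<phi> g x = y))"

definition paradoxical_action :: "('g, 'm) monoid_scheme \<Rightarrow> ('g \<Rightarrow> real \<Rightarrow> real) \<Rightarrow> bool" where
  "paradoxical_action G \<phi> \<longleftrightarrow> (\<forall>S. is_selector G \<phi> S \<longrightarrow> S \<notin> sets lebesgue)"

datatype recf = Zero | Succ | Proj nat | Orc | Cn recf "recf list" | Pr recf recf | Mn recf

inductive eval_rec :: "(nat \<Rightarrow> nat) \<Rightarrow> recf \<Rightarrow> nat list \<Rightarrow> nat \<Rightarrow> bool" for orc where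
  zero: "eval_rec orc Zero xs 0"
| succ: "eval_rec orc Succ (x # xs) (Suc x)"
| proj: "i < length xs \<Longrightarrow> eval_rec orc (Proj i) xs (xs ! i)"
| orc:  "eval_rec orc Orc (x # xs) (orc x)"
| cn:   "list_all2 (\<lambda>g y. eval_rec orc g xs y) gs ys \<Longrightarrow> eval_rec orc f ys z \<Longrightarrow> eval_rec orc (Cn f gs) xs z"
| pr0:  "eval_rec orc f xs y \<Longrightarrow> eval_rec orc (Pr f g) (0 # xs) y"
| prS:  "eval_rec orc (Pr f g) (n # xs) y \<Longrightarrow> eval_rec orc g (n # y # xs) z \<Longrightarrow> eval_rec orc (Pr f g) (Suc n # xs) z"
| mn:   "eval_rec orc f (n # xs) 0 \<Longrightarrow> (\<forall>m<n. \<exists>k. eval_rec orc f (m # xs) (Suc k)) \<Longrightarrow> eval_rec orc (Mn f) xs n"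

definition turing_le :: "(nat \<Rightarrow> nat) \<Rightarrow> (nat \<Rightarrow> nat) \<Rightarrow> bool" where
  "turing_le f g \<longleftrightarrow> (\<exists>p. \<forall>n. eval_rec g p [n] (f n))"

text \<open>Coding of a real by its Dedekind cut, with rationals enumerated computably:
  n = prod_encode (a,b) codes the rational int_decode a / (b+1).\<close>
definition real_code :: "real \<Rightarrow> nat \<Rightarrow> nat" where
  "real_code x n = (case prod_decode n of (a, b) \<Rightarrow>
      if real_of_int (int_decode a) / real (Suc b) < x then 1 else 0)"

definition turing_equiv_real :: "real \<Rightarrow> real \<Rightarrow> bool" where
  "turing_equiv_real x y \<longleftrightarrow> turing_le (real_code x) (real_code y) \<and> turing_le (real_code y) (real_code x)"

definition turing_closure :: "real set \<Rightarrow> real set" where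
  "turing_closure A = {x. \<exists>a\<in>A. turing_equiv_real x a}"

end

theory Submission
  imports Defs
begin

unbundle cardinal_syntax

inductive_cases ZeroE: "eval_rec g Zero xs y"
inductive_cases SuccE: "eval_rec g Succ xs y"
inductive_cases ProjE: "eval_rec g (Proj i) xs y"
inductive_cases OrcE: "eval_rec g Orc xs y"
inductive_cases CnE: "eval_rec g (Cn f gs) xs y"
inductive_cases Pr0E: "eval_rec g (Pr f h) (0 # xs) y"
inductive_cases PrSE: "eval_rec g (Pr f h) (Suc n # xs) y"
inductive_cases MnE: "eval_rec g (Mn f) xs y"

lemma eval_det: "eval_rec g p xs y \<Longrightarrow> eval_rec g p xs y' \<Longrightarrow> y = y'"
proof (induction arbitrary: y' rule: eval_rec.induct)
  case (zero xs) then show ?case by (blast elim: ZeroE)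
next
  case (succ x xs) then show ?case by (blast elim: SuccE)
next
  case (proj i xs) then show ?case by (blast elim: ProjE)
next
  case (orc x xs) then show ?case by (blast elim: OrcE)
next
  case (cn xs gs ys f z)
  from cn.prems obtain ys' where a: "list_all2 (\<lambda>h y. eval_rec g h xs y) gs ys'" and b: "eval_rec g f ys' y'"
    by (rule CnE)
  have "ys = ys'" using cn(1) a
  proof (induction gs arbitrary: ys ys')
    case Nil then show ?case by auto
  next
    case (Cons h gs)
    then show ?case by (cases ys; cases ys'; auto)
  qed
  then show ?case using cn(2) b by simp
next
  case (pr0 f xs y h)
  from pr0.prems have "eval_rec g f xs y'" by (rule Pr0E)
  then show ?case using pr0.IH by blast
next
  case (prS f h n xs y z)
  from prS.prems obtain y1 where a: "eval_rec g (Pr f h) (n # xs) y1" and b: "eval_rec g h (n # y1 # xs) y'"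
    by (rule PrSE)
  have "y = y1" using prS.IH(1) a by blast
  then show ?case using prS.IH(2) b by blast
next
  case (mn f n xs)
  from mn.prems have a: "eval_rec g f (y' # xs) 0" by (rule MnE) simp
  from mn.prems have b: "\<forall>m<y'. \<exists>k. eval_rec g f (m # xs) (Suc k)" by (rule MnE) simp
  show ?case
  proof (rule linorder_cases[of n y'])
    assume "n < y'" then obtain k where k: "eval_rec g f (n # xs) (Suc k)" using b by blast
    have "0 = Suc k" using mn.IH(1) k by blast
    then show ?thesis by simp
  next
    assume "y' < n" 
    have "\<exists>k. eval_rec g f (y' # xs) (Suc k) \<and> (\<forall>z. eval_rec g f (y' # xs) z \<longrightarrow> Suc k = z)"
      using mp[OF spec[where x=y', OF mn.IH(2)] \<open>y' < n\<close>] .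
    then obtain k where "\<forall>z. eval_rec g f (y' # xs) z \<longrightarrow> Suc k = z" by blast
    then have "Suc k = 0" using a by blast
    then show ?thesis by simp
  qed simp
qed

instance recf :: countable by countable_datatype

lemma turing_le_countable: "countable {f. turing_le f g}"
proof -
  have "{f. turing_le f g} \<subseteq> (\<lambda>p. THE f. \<forall>n. eval_rec g p [n] (f n)) ` UNIV"
  proof
    fix f assume "f \<in> {f. turing_le f g}"
    then obtain p where p: "\<forall>n. eval_rec g p [n] (f n)" by (auto simp: turing_le_def)
    have "(THE f. \<forall>n. eval_rec g p [n] (f n)) = f"
      proof (rule the_equality)
      show "\<forall>n. eval_rec g p [n] (f n)" by (rule p)
      fix h assume "\<forall>n. eval_rec g p [n] (h n)"
      then show "h = f" using p eval_det by (metis ext)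
    qed
    then show "f \<in> (\<lambda>p. THE f. \<forall>n. eval_rec g p [n] (f n)) ` UNIV" by (intro image_eqI[where x=p]) auto
  qed
  then show ?thesis by (rule countable_subset) simp
qed

lemma turing_le_refl: "turing_le f f"
proof -
  have "eval_rec f (Cn Orc [Proj 0]) [n] (f n)" for n
  proof (rule eval_rec.cn[where ys="[n]"])
    have "eval_rec f (Proj 0) [n] ([n] ! 0)" by (rule eval_rec.proj) simp
    then show "list_all2 (\<lambda>h y. eval_rec f h [n] y) [Proj 0] [n]" by simp
    show "eval_rec f Orc [n] (f n)" by (rule eval_rec.orc)
  qed
  then show ?thesis unfolding turing_le_def by blast
qed

lemma turing_equiv_refl: "turing_equiv_real x x"
  by (simp add: turing_equiv_real_def turing_le_refl)

lemma turing_equiv_sym: "turing_equiv_real x y = turing_equiv_real y x"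
  by (auto simp: turing_equiv_real_def)

lemma real_code_inj: "inj real_code"
proof (rule injI, rule ccontr)
  have main: "real_code x \<noteq> real_code y" if "x < y" for x y
  proof -
    obtain r where r: "r \<in> \<rat>" "x < r" "r < y" using Rats_dense_in_real[OF \<open>x < y\<close>] by blast
    obtain a b where ab: "b > 0" "r = of_int a / of_int b" using r(1) by (metis Rats_cases')
    define n where "n = prod_encode (int_encode a, nat b - 1)"
    have rb: "real (Suc (nat b - 1)) = of_int b" using ab(1) by simp
    have rc: "real_code z n = (if r < z then 1 else 0)" for z
      unfolding real_code_def n_def prod_encode_inverse int_encode_inverse using rb ab(2) by simp
    have "real_code y n = 1" "real_code x n = 0" using r(2,3) rc by auto
    then show ?thesis by (metis zero_neq_one)
  qed
  fix x y assume "real_code x = real_code y" "x \<noteq> y"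
  then show False using main[of x y] main[of y x] by (metis linorder_neqE)
qed

lemma turing_class_countable: "countable {x. turing_equiv_real x a}"
proof -
  have "real_code ` {x. turing_equiv_real x a} \<subseteq> {f. turing_le f (real_code a)}"
    by (auto simp: turing_equiv_real_def)
  then have "countable (real_code ` {x. turing_equiv_real x a})"
    using turing_le_countable countable_subset by blast
  then show ?thesis using real_code_inj countable_image_inj_on by (metis inj_on_subset subset_UNIV)
qed


definition small :: "real set \<Rightarrow> bool" where
  "small X \<longleftrightarrow> |X| <o |UNIV::real set|"

lemma small_countable: "countable X \<Longrightarrow> small X"
proof -
  assume "countable X"
  then obtain f :: "real \<Rightarrow> nat" where "inj_on f X" by (auto simp: countable_def)
  then have "|X| \<le>o |UNIV::nat set|" using card_of_ordLeq by blast
  moreover have "|UNIV::nat set| <o |UNIV::real set|"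
  proof -
    have "\<not> (\<exists>f. inj_on f (UNIV::real set) \<and> f ` UNIV \<subseteq> (UNIV::nat set))"
      using uncountable_UNIV_real by (auto simp: countable_def)
    then show ?thesis using card_of_ordLess by blast
  qed
  ultimately show ?thesis unfolding small_def using ordLeq_ordLess_trans by blast
qed

lemma small_subset: "small Y \<Longrightarrow> X \<subseteq> Y \<Longrightarrow> small X"
  unfolding small_def using card_of_mono1 ordLeq_ordLess_trans by blast

lemma small_UN:
  assumes I: "small I" and Bc: "\<And>i. i \<in> I \<Longrightarrow> countable (B i)"
  shows "small (\<Union>i\<in>I. B i)"
proof (cases "finite I")
  case True
  then show ?thesis using Bc by (intro small_countable) (auto intro: countable_finite)
next
  case False
  have "|B i| \<le>o |I|" if iI: "i \<in> I" for i
  proof -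
    obtain f :: "real \<Rightarrow> nat" where f: "inj_on f (B i)" using Bc[OF iI] by (auto simp: countable_def)
    obtain g :: "nat \<Rightarrow> real" where g: "inj g" "range g \<subseteq> I" using False infinite_countable_subset by metis
    have "inj_on (g \<circ> f) (B i)" using f g(1) by (simp add: comp_inj_on inj_on_subset)
    moreover have "(g \<circ> f) ` B i \<subseteq> I" using g(2) by auto
    ultimately show ?thesis using card_of_ordLeq by blast
  qed
  then have "|\<Union>i\<in>I. B i| \<le>o |I|" using card_of_UNION_ordLeq_infinite[OF False] card_of_refl
    by (metis ordIso_iff_ordLeq)
  then show ?thesis using I unfolding small_def using ordLeq_ordLess_trans by blast
qed

lemma small_Un: "small X \<Longrightarrow> small Y \<Longrightarrow> small (X \<union> Y)"
  unfolding small_def using card_of_Un_ordLess_infinite infinite_UNIV_char_0 by blast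

lemma gadgets:
  fixes R :: "real \<Rightarrow> real \<Rightarrow> bool" and \<tau> :: "real \<Rightarrow> real set"
  assumes cnt1: "\<And>a. countable {x. R a x}" and cnt2: "\<And>a. countable {x. R x a}"
    and big: "\<And>i X. small X \<Longrightarrow> \<not> \<tau> i \<subseteq> X"
  shows "\<exists>q p1 p2. \<forall>i. q i \<in> \<tau> i \<and> p1 i \<in> \<tau> i \<and> p2 i \<in> \<tau> i \<and>
     {x. R (p1 i) x} \<inter> {x. R (p2 i) x} = {} \<and>
     (\<forall>j. j \<noteq> i \<longrightarrow> ({x. R (p1 i) x} \<union> {x. R (p2 i) x}) \<inter> ({x. R (p1 j) x} \<union> {x. R (p2 j) x}) = {}) \<and>
     (\<forall>j. q i \<notin> {x. R (p1 j) x} \<union> {x. R (p2 j) x})"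
proof -
  define N where "N a = {x. R a x}" for a
  define r where "r = |UNIV::real set|"
  have WO: "Well_order r" unfolding r_def by (rule card_of_Well_order)
  have wf: "wf (r - Id)" using WO wo_rel.WF unfolding wo_rel_def by blast
  have Fr: "Field r = UNIV" unfolding r_def by (rule Field_card_of)
  have smallU: "small (underS r i)" for i
    using card_of_underS[of r i] unfolding r_def small_def by (simp add: card_of_card_order_on Field_card_of)
  define blk where "blk t = (case t of (q, a, b) \<Rightarrow> {q} \<union> N a \<union> N b)" for t :: "real \<times> real \<times> real"
  define used where "used h i = (\<Union>j\<in>underS r i. blk (h j))" for h :: "real \<Rightarrow> real \<times> real \<times> real" and i
  define spec where "spec i U t = (case t of (q, a, b) \<Rightarrow> q \<in> \<tau> i \<and> a \<in> \<tau> i \<and> b \<in> \<tau> i \<and>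
      N a \<inter> U = {} \<and> N b \<inter> (U \<union> N a) = {} \<and> q \<notin> U \<union> N a \<union> N b)" for i U t
  define F where "F h i = (SOME t. spec i (used h i) t)" for h i
  define g where "g = wfrec (r - Id) F"
  have cntblk: "countable (blk t)" for t
    using cnt1 by (cases t) (auto simp: blk_def N_def)
  have small_used: "small (used h i)" for h i
    unfolding used_def by (rule small_UN[OF smallU cntblk])
  have ex_spec: "\<exists>t. spec i U t" if U: "small U" for i U
  proof -
    have sNr: "small (\<Union>u\<in>V. {x. R x u})" if "small V" for V
      by (rule small_UN[OF that cnt2])
    have "\<not> \<tau> i \<subseteq> (\<Union>u\<in>U. {x. R x u})" by (rule big[OF sNr[OF U]])
    then obtain a where a: "a \<in> \<tau> i" "a \<notin> (\<Union>u\<in>U. {x. R x u})" by blast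
    have sUa: "small (U \<union> N a)" unfolding N_def by (rule small_Un[OF U small_countable[OF cnt1]])
    have "\<not> \<tau> i \<subseteq> (\<Union>u\<in>U \<union> N a. {x. R x u})" by (rule big[OF sNr[OF sUa]])
    then obtain b where b: "b \<in> \<tau> i" "b \<notin> (\<Union>u\<in>U \<union> N a. {x. R x u})" by blast
    have "small (U \<union> N a \<union> N b)" using small_Un[OF sUa small_countable[OF cnt1]] unfolding N_def .
    then have "\<not> \<tau> i \<subseteq> U \<union> N a \<union> N b" by (rule big)
    then obtain q where q: "q \<in> \<tau> i" "q \<notin> U \<union> N a \<union> N b" by blast
    have "spec i U (q, a, b)" using a b q by (auto simp: spec_def N_def)
    then show ?thesis by blast
  qed
  have used_cut: "used (cut h (r - Id) i) i = used h i" for h i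
    unfolding used_def by (intro SUP_cong refl) (auto simp: underS_def cut_apply)
  have gspec: "spec i (used g i) (g i)" for i
  proof -
    have "g i = F (cut g (r - Id) i) i" unfolding g_def by (rule wfrec[OF wf])
    also have "\<dots> = (SOME t. spec i (used g i) t)" unfolding F_def used_cut ..
    finally show ?thesis using someI_ex[OF ex_spec[OF small_used]] by metis
  qed
  define q where "q i = fst (g i)" for i
  define p1 where "p1 i = fst (snd (g i))" for i
  define p2 where "p2 i = snd (snd (g i))" for i
  have gi: "g i = (q i, p1 i, p2 i)" for i by (simp add: q_def p1_def p2_def)
  have sp: "q i \<in> \<tau> i \<and> p1 i \<in> \<tau> i \<and> p2 i \<in> \<tau> i \<and>
      N (p1 i) \<inter> used g i = {} \<and> N (p2 i) \<inter> (used g i \<union> N (p1 i)) = {} \<and> q i \<notin> used g i \<union> N (p1 i) \<union> N (p2 i)" for i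
    using gspec[of i] unfolding gi spec_def by simp
  have sub: "{q j} \<union> N (p1 j) \<union> N (p2 j) \<subseteq> used g i" if "j \<in> underS r i" for i j
    using that unfolding used_def blk_def gi by auto
  have tot: "j \<in> underS r i \<or> i \<in> underS r j" if "i \<noteq> j" for i j
    using WO that Fr unfolding well_order_on_def linear_order_on_def total_on_def underS_def by auto
  show ?thesis
  proof (intro exI allI conjI)
    fix i
    show "q i \<in> \<tau> i" "p1 i \<in> \<tau> i" "p2 i \<in> \<tau> i" using sp[of i] by auto
    show "{x. R (p1 i) x} \<inter> {x. R (p2 i) x} = {}" using sp[of i] by (auto simp: N_def)
    fix j
    show "j \<noteq> i \<longrightarrow> ({x. R (p1 i) x} \<union> {x. R (p2 i) x}) \<inter> ({x. R (p1 j) x} \<union> {x. R (p2 j) x}) = {}"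
    proof
      assume "j \<noteq> i"
      then have "j \<in> underS r i \<or> i \<in> underS r j" using tot by blast
      then show "({x. R (p1 i) x} \<union> {x. R (p2 i) x}) \<inter> ({x. R (p1 j) x} \<union> {x. R (p2 j) x}) = {}"
      proof
        assume "j \<in> underS r i"
        then show ?thesis using sub[of j i] sp[of i] unfolding N_def by blast
      next
        assume "i \<in> underS r j"
        then show ?thesis using sub[of i j] sp[of j] unfolding N_def by blast
      qed
    qed
    show "q i \<notin> {x. R (p1 j) x} \<union> {x. R (p2 j) x}"
    proof (cases "i = j")
      case True then show ?thesis using sp[of i] unfolding N_def by blast
    next
      case False
      then have "j \<in> underS r i \<or> i \<in> underS r j" using tot by blast
      then show ?thesis
      proof
        assume "j \<in> underS r i"
        then show ?thesis using sub[of j i] sp[of i] unfolding N_def by blast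
      next
        assume "i \<in> underS r j"
        then show ?thesis using sub[of i j] sp[of j] unfolding N_def by blast
      qed
    qed
  qed
qed


lemma rat_interval:
  fixes x e :: real assumes "e > 0"
  obtains a b :: rat where "x \<in> {of_rat a<..<of_rat b}" "{of_rat a<..<of_rat b} \<subseteq> ball x e"
proof -
  obtain r where r: "r \<in> \<rat>" "x - e < r" "r < x" using Rats_dense_in_real[of "x - e" x] assms by auto
  obtain s where s: "s \<in> \<rat>" "x < s" "s < x + e" using Rats_dense_in_real[of x "x + e"] assms by auto
  obtain a where a: "r = of_rat a" using r(1) Rats_cases by blast
  obtain b where b: "s = of_rat b" using s(1) Rats_cases by blast
  show ?thesis
    by (rule that[of a b]) (use r s a b in \<open>auto simp: dist_real_def\<close>)
qed

lemma uncountable_closed_lepoll: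
  fixes P :: "real set" assumes cl: "closed P" and unc: "uncountable P"
  shows "(UNIV::real set) \<lesssim> P"
proof -
  define S where "S = {x. \<forall>e>0. uncountable (P \<inter> ball x e)}"
  define I where "I = {p :: rat \<times> rat. countable (P \<inter> {of_rat (fst p)<..<of_rat (snd p)})}"
  have PS: "countable (P - S)"
  proof -
    have "P - S \<subseteq> (\<Union>p\<in>I. P \<inter> {of_rat (fst p)<..<of_rat (snd p)})"
    proof
      fix x assume x: "x \<in> P - S"
      then obtain e where e: "e > 0" "countable (P \<inter> ball x e)" by (auto simp: S_def)
      obtain a b where ab: "x \<in> {of_rat a<..<of_rat b}" "{of_rat a<..<of_rat b} \<subseteq> ball x e"
        using rat_interval[OF e(1), of x] by blast
      have "P \<inter> {of_rat a<..<of_rat b} \<subseteq> P \<inter> ball x e" using ab(2) by blast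
      then have "countable (P \<inter> {of_rat a<..<of_rat b})" using e(2) by (rule countable_subset)
      then have "(a,b) \<in> I" by (simp add: I_def)
      moreover have "x \<in> P \<inter> {of_rat (fst (a,b))<..<of_rat (snd (a,b))}" using x ab(1) by simp
      ultimately show "x \<in> (\<Union>p\<in>I. P \<inter> {of_rat (fst p)<..<of_rat (snd p)})" by (rule UN_I)
    qed
    moreover have "countable (\<Union>p\<in>I. P \<inter> {of_rat (fst p)<..<of_rat (snd p)})"
    proof (rule countable_UN)
      show "countable I" by (rule countableI_type)
      fix p assume "p \<in> I" then show "countable (P \<inter> {of_rat (fst p)<..<of_rat (snd p)})" by (simp add: I_def)
    qed
    ultimately show ?thesis by (rule countable_subset)
  qed
  have SP: "S \<subseteq> P"
  proof
    fix x assume x: "x \<in> S"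
    show "x \<in> P"
    proof (rule ccontr)
      assume "x \<notin> P"
      then obtain e where "e > 0" "ball x e \<subseteq> - P" using cl open_contains_ball[of "- P"] by (auto simp: closed_def)
      then have "P \<inter> ball x e = {}" by auto
      then show False using x \<open>e > 0\<close> by (auto simp: S_def)
    qed
  qed
  have Sne: "S \<noteq> {}"
  proof
    assume "S = {}" then have "P - S = P" by simp
    then show False using PS unc by simp
  qed
  have der: "euclidean derived_set_of S = S"
  proof -
    have "euclidean derived_set_of S = {x. x islimpt S}"
      by (auto simp: derived_set_of_def islimpt_def)
    also have "\<dots> = S"
    proof (rule Set.set_eqI, rule iffI)
      fix x assume "x \<in> {x. x islimpt S}"
      then have lim: "x islimpt S" by simp
      show "x \<in> S" unfolding S_def
      proof (intro CollectI allI impI)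
        fix e :: real assume "e > 0"
        then obtain y where y: "y \<in> S" "dist y x < e" using lim by (auto simp: islimpt_approachable)
        then have "uncountable (P \<inter> ball y (e - dist y x))" by (auto simp: S_def)
        moreover have "P \<inter> ball y (e - dist y x) \<subseteq> P \<inter> ball x e"
          by (auto simp: dist_real_def)
        ultimately show "uncountable (P \<inter> ball x e)" using countable_subset by blast
      qed
    next
      fix x assume "x \<in> S"
      show "x \<in> {x. x islimpt S}" unfolding mem_Collect_eq islimpt_approachable
      proof (intro allI impI)
        fix e :: real assume "e > 0"
        then have u: "uncountable (P \<inter> ball x e)" using \<open>x \<in> S\<close> by (auto simp: S_def)
        have "countable ((P - S) \<union> {x})" using PS by simp
        then have "\<not> (P \<inter> ball x e \<subseteq> (P - S) \<union> {x})" using u countable_subset by blast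
        then obtain y where "y \<in> P \<inter> ball x e" "y \<notin> (P - S) \<union> {x}" by blast
        then show "\<exists>x'\<in>S. x' \<noteq> x \<and> dist x' x < e" by (auto simp: dist_commute)
      qed
    qed
    finally show ?thesis .
  qed
  have "(UNIV::real set) \<lesssim> S"
    by (rule lepoll_perfect_set[of euclidean S]) (use der Sne completely_metrizable_space_euclidean in auto)
  then show ?thesis using SP subset_imp_lepoll lepoll_trans by blast
qed


lemma countable_null_lebesgue: "countable (A :: real set) \<Longrightarrow> A \<in> null_sets lebesgue"
  using countable_imp_null_set_lborel null_sets_completionI by blast

lemma pos_contains_closed:
  fixes M :: "real set"
  assumes M: "M \<in> sets lebesgue" "M \<notin> null_sets lebesgue"
  obtains T where "closed T" "T \<subseteq> M" "uncountable T"
proof -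
  have pos: "0 < emeasure lebesgue M" using M by (simp add: null_sets_def zero_less_iff_neq_zero)
  obtain z where z: "0 < z" "z < emeasure lebesgue M" using dense[OF pos] by blast
  have zt: "z < top_class.top" using less_le_trans[OF z(2) top_greatest] .
  obtain e where e: "z = ennreal e" "e \<ge> 0" using zt by (cases z) auto
  have "e > 0" using z(1) e by auto
  obtain T where T: "closed T" "T \<subseteq> M" "M - T \<in> lmeasurable" "emeasure lebesgue (M - T) < ennreal e"
    using sets_lebesgue_inner_closed[OF M(1) \<open>e > 0\<close>] by blast
  have "uncountable T"
  proof
    assume "countable T"
    then have Tn: "T \<in> null_sets lebesgue" by (rule countable_null_lebesgue)
    have MT: "M - T \<in> sets lebesgue" using T(3) by (rule fmeasurableD)
    have "emeasure lebesgue ((M - T) \<union> T) = emeasure lebesgue (M - T)"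
      by (rule emeasure_Un_null_set[OF MT Tn])
    moreover have "(M - T) \<union> T = M" using T(2) by auto
    ultimately have "emeasure lebesgue M = emeasure lebesgue (M - T)" by simp
    then show False using T(4) z e by auto
  qed
  then show ?thesis using T that by blast
qed

lemma bernstein_nonmeasurable:
  fixes X :: "real set"
  assumes H: "\<And>P. closed P \<Longrightarrow> uncountable P \<Longrightarrow> P \<inter> X \<noteq> {} \<and> P - X \<noteq> {}"
  shows "X \<notin> sets lebesgue"
proof
  assume X: "X \<in> sets lebesgue"
  have "X \<in> null_sets lebesgue"
  proof (rule ccontr)
    assume "X \<notin> null_sets lebesgue"
    then obtain T where "closed T" "T \<subseteq> X" "uncountable T" using pos_contains_closed X by blast
    then show False using H by blast
  qed
  moreover have "- X \<in> null_sets lebesgue"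
  proof (rule ccontr)
    assume "- X \<notin> null_sets lebesgue"
    moreover have "- X \<in> sets lebesgue" using sets.compl_sets[OF X] by (simp add: Compl_eq_Diff_UNIV)
    ultimately obtain T where "closed T" "T \<subseteq> - X" "uncountable T" using pos_contains_closed by blast
    then show False using H by blast
  qed
  ultimately have "X \<union> - X \<in> null_sets lebesgue" by blast
  then have "{0..1::real} \<in> null_sets lebesgue" by (rule null_sets_subset) auto
  then have "emeasure lebesgue {0..1::real} = 0" by auto
  moreover have "emeasure lebesgue {0..1::real} = 1" by (simp add: emeasure_completion)
  ultimately show False by simp
qed


lemma closed_sets_lepoll: "{P :: real set. closed P} \<lesssim> (UNIV::real set)"
proof -
  define I where "I p = {of_rat (fst p)<..<of_rat (snd p) :: real}" for p :: "rat \<times> rat"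
  define enc where "enc P = to_nat ` {p. P \<inter> I p = {}}" for P :: "real set"
  have rep: "P = - (\<Union>p\<in>{p. P \<inter> I p = {}}. I p)" if cP: "closed P" for P
  proof (intro Set.set_eqI iffI)
    fix x assume "x \<in> P" then show "x \<in> - (\<Union>p\<in>{p. P \<inter> I p = {}}. I p)" by auto
  next
    fix x assume x: "x \<in> - (\<Union>p\<in>{p. P \<inter> I p = {}}. I p)"
    show "x \<in> P"
    proof (rule ccontr)
      assume "x \<notin> P"
      then obtain e where "e > 0" "ball x e \<subseteq> - P" using cP open_contains_ball[of "- P"] by (auto simp: closed_def)
      then obtain a b where ab: "x \<in> {of_rat a<..<of_rat b}" "{of_rat a<..<of_rat b} \<subseteq> ball x e"
        using rat_interval by metis
      then have "P \<inter> I (a,b) = {}" using \<open>ball x e \<subseteq> - P\<close> by (auto simp: I_def)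
      then show False using x ab(1) by (auto simp: I_def)
    qed
  qed
  have "inj_on enc {P. closed P}"
  proof (rule inj_onI)
    fix P Q assume P: "P \<in> {P. closed P}" and Q: "Q \<in> {P. closed P}" and e: "enc P = enc Q"
    have "{p. P \<inter> I p = {}} = {p. Q \<inter> I p = {}}"
      using e unfolding enc_def by (simp add: inj_image_eq_iff[OF inj_to_nat])
    then show "P = Q" using rep P Q by (metis mem_Collect_eq)
  qed
  then have "{P :: real set. closed P} \<lesssim> (UNIV :: nat set set)" unfolding lepoll_def by blast
  also have "\<dots> \<approx> (UNIV :: real set)" by (rule nat_sets_eqpoll_reals)
  finally show ?thesis .
qed

lemma big_not_small:
  fixes P X :: "real set"
  assumes "(UNIV::real set) \<lesssim> P" "small X"
  shows "\<not> P \<subseteq> X"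
proof
  assume "P \<subseteq> X"
  then have "(UNIV::real set) \<lesssim> X" using assms(1) subset_imp_lepoll lepoll_trans by blast
  then have "|UNIV::real set| \<le>o |X|" unfolding lepoll_def using card_of_ordLeq by blast
  then have "|UNIV::real set| <o |UNIV::real set|" using assms(2) unfolding small_def using ordLeq_ordLess_trans by blast
  then show False using ordLess_irreflexive by blast
qed

definition Gof :: "(real \<Rightarrow> real \<Rightarrow> bool) \<Rightarrow> (real \<Rightarrow> real) monoid" where
  "Gof E = \<lparr>carrier = {f. bij f \<and> (\<forall>x. E x (f x))}, mult = (\<lambda>f g. f \<circ> g), one = id\<rparr>"

lemma Gof_group:
  assumes refl: "\<And>x. E x x" and sym: "\<And>x y. E x y \<Longrightarrow> E y x" and trans: "\<And>x y z. E x y \<Longrightarrow> E y z \<Longrightarrow> E x z"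
  shows "group (Gof E)"
proof (rule groupI)
  fix x y assume "x \<in> carrier (Gof E)" "y \<in> carrier (Gof E)"
  then show "x \<otimes>\<^bsub>Gof E\<^esub> y \<in> carrier (Gof E)"
    by (auto simp: Gof_def bij_comp intro: trans)
next
  show "\<one>\<^bsub>Gof E\<^esub> \<in> carrier (Gof E)" by (simp add: Gof_def refl)
next
  fix x y z assume "x \<in> carrier (Gof E)" "y \<in> carrier (Gof E)" "z \<in> carrier (Gof E)"
  then show "x \<otimes>\<^bsub>Gof E\<^esub> y \<otimes>\<^bsub>Gof E\<^esub> z = x \<otimes>\<^bsub>Gof E\<^esub> (y \<otimes>\<^bsub>Gof E\<^esub> z)"
    by (simp add: Gof_def comp_assoc)
next
  fix x assume "x \<in> carrier (Gof E)" then show "\<one>\<^bsub>Gof E\<^esub> \<otimes>\<^bsub>Gof E\<^esub> x = x" by (simp add: Gof_def)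
next
  fix x assume x: "x \<in> carrier (Gof E)"
  then have bx: "bij x" and ex: "\<And>z. E z (x z)" by (auto simp: Gof_def)
  have "inv_into UNIV x \<in> carrier (Gof E)"
  proof -
    have "E z (inv_into UNIV x z)" for z
    proof -
      have "x (inv_into UNIV x z) = z" using bx by (simp add: bij_is_surj surj_f_inv_f)
      then have "E (inv_into UNIV x z) z" using ex[of "inv_into UNIV x z"] by simp
      then show ?thesis by (rule sym)
    qed
    then show ?thesis using bx by (simp add: Gof_def bij_imp_bij_inv)
  qed
  moreover have "inv_into UNIV x \<otimes>\<^bsub>Gof E\<^esub> x = \<one>\<^bsub>Gof E\<^esub>"
    using bx by (simp add: Gof_def bij_is_inj)
  ultimately show "\<exists>y\<in>carrier (Gof E). y \<otimes>\<^bsub>Gof E\<^esub> x = \<one>\<^bsub>Gof E\<^esub>" by blast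
qed

lemma Gof_action:
  assumes "group (Gof E)"
  shows "group_action (Gof E) UNIV (\<lambda>g. g)"
proof -
  have "(\<lambda>g. g) \<in> hom (Gof E) (BijGroup UNIV)"
  proof (rule homI)
    fix x assume "x \<in> carrier (Gof E)"
    then show "x \<in> carrier (BijGroup UNIV)" by (auto simp: Gof_def BijGroup_def Bij_def)
  next
    fix x y assume "x \<in> carrier (Gof E)" "y \<in> carrier (Gof E)"
    then show "x \<otimes>\<^bsub>Gof E\<^esub> y = x \<otimes>\<^bsub>BijGroup UNIV\<^esub> y"
      by (auto simp: Gof_def BijGroup_def Bij_def compose_def)
  qed
  then show ?thesis
    unfolding group_action_def group_hom_def group_hom_axioms_def
    using assms group_BijGroup by blast
qed

lemma Gof_orbit:
  assumes refl: "\<And>x. E x x" and sym: "\<And>x y. E x y \<Longrightarrow> E y x" and trans: "\<And>x y z. E x y \<Longrightarrow> E y z \<Longrightarrow> E x z"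
  shows "(\<exists>g\<in>carrier (Gof E). g x = y) \<longleftrightarrow> E x y"
proof
  assume "\<exists>g\<in>carrier (Gof E). g x = y" then show "E x y" by (auto simp: Gof_def)
next
  assume xy: "E x y"
  define s where "s z = (if z = x then y else if z = y then x else z)" for z
  have "s \<circ> s = id" by (auto simp: s_def)
  then have "bij s" using o_bij by blast
  moreover have "E z (s z)" for z using xy refl sym by (auto simp: s_def)
  ultimately have "s \<in> carrier (Gof E)" by (simp add: Gof_def)
  moreover have "s x = y" by (simp add: s_def)
  ultimately show "\<exists>g\<in>carrier (Gof E). g x = y" by blast
qed


theorem mainTheorem7:
  shows "\<exists>(G :: (real \<Rightarrow> real) monoid) (\<phi> :: (real \<Rightarrow> real) \<Rightarrow> real \<Rightarrow> real).
           group G \<and> group_action G UNIV \<phi> \<and> paradoxical_action G \<phi> \<and>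
           (\<forall>A. is_selector G \<phi> A \<longrightarrow> turing_closure A \<notin> sets lebesgue)"
proof -
  define R where "R = turing_equiv_real"
  have cnt2: "countable {x. R x a}" for a unfolding R_def by (rule turing_class_countable)
  have cnt1: "countable {x. R a x}" for a unfolding R_def using turing_class_countable[of a]
    by (simp add: turing_equiv_sym)
  define F where "F = {P :: real set. closed P \<and> uncountable P}"
  have "F \<subseteq> {P. closed P}" unfolding F_def by blast
  then have "F \<lesssim> (UNIV::real set)"
    using lepoll_trans[OF subset_imp_lepoll closed_sets_lepoll] by blast
  then obtain g0 :: "real \<Rightarrow> real set" where g0: "F \<subseteq> g0 ` UNIV" by (auto simp: lepoll_iff)
  define \<tau> where "\<tau> i = (if g0 i \<in> F then g0 i else UNIV)" for i
  have UF: "UNIV \<in> F" unfolding F_def using uncountable_UNIV_real by simp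
  have \<tau>F: "\<tau> i \<in> F" for i using UF by (simp add: \<tau>_def)
  have \<tau>surj: "\<exists>i. \<tau> i = P" if "P \<in> F" for P using g0 that by (force simp: \<tau>_def)
  have big: "\<not> \<tau> i \<subseteq> X" if sX: "small X" for i X
  proof -
    have "closed (\<tau> i)" "uncountable (\<tau> i)" using \<tau>F[of i] unfolding F_def by auto
    then have "(UNIV::real set) \<lesssim> \<tau> i" by (rule uncountable_closed_lepoll)
    then show ?thesis by (rule big_not_small[OF _ sX])
  qed
  have ex: "\<exists>q p1 p2. \<forall>i. q i \<in> \<tau> i \<and> p1 i \<in> \<tau> i \<and> p2 i \<in> \<tau> i \<and>
     {x. R (p1 i) x} \<inter> {x. R (p2 i) x} = {} \<and>
     (\<forall>j. j \<noteq> i \<longrightarrow> ({x. R (p1 i) x} \<union> {x. R (p2 i) x}) \<inter> ({x. R (p1 j) x} \<union> {x. R (p2 j) x}) = {}) \<and>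
     (\<forall>j. q i \<notin> {x. R (p1 j) x} \<union> {x. R (p2 j) x})"
    by (rule gadgets[OF cnt1 cnt2 big])
  then obtain q p1 p2 where gad0: "\<forall>i. q i \<in> \<tau> i \<and> p1 i \<in> \<tau> i \<and> p2 i \<in> \<tau> i \<and>
     {x. R (p1 i) x} \<inter> {x. R (p2 i) x} = {} \<and>
     (\<forall>j. j \<noteq> i \<longrightarrow> ({x. R (p1 i) x} \<union> {x. R (p2 i) x}) \<inter> ({x. R (p1 j) x} \<union> {x. R (p2 j) x}) = {}) \<and>
     (\<forall>j. q i \<notin> {x. R (p1 j) x} \<union> {x. R (p2 j) x})"
    by (elim exE) (erule that)
  note gad = spec[OF gad0]
  define K where "K i = {x. R (p1 i) x} \<union> {x. R (p2 i) x}" for i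
  have Kd: "j \<noteq> i \<Longrightarrow> K i \<inter> K j = {}" for i j
    using gad[of i] unfolding K_def by simp
  have Kdisj: "x \<in> K i \<Longrightarrow> x \<in> K j \<Longrightarrow> i = j" for x i j
    using Kd[of j i] by blast
  define E where "E x y \<longleftrightarrow> x = y \<or> (\<exists>i. x \<in> K i \<and> y \<in> K i)" for x y
  have Er: "E x x" for x by (simp add: E_def)
  have Es: "E x y \<Longrightarrow> E y x" for x y by (auto simp: E_def)
  have Et: "E x y \<Longrightarrow> E y z \<Longrightarrow> E x z" for x y z
  proof -
    assume xy: "E x y" and yz: "E y z"
    show "E x z"
    proof (cases "x = y \<or> y = z")
      case True then show ?thesis using xy yz by auto
    next
      case False
      then obtain i j where "x \<in> K i" "y \<in> K i" "y \<in> K j" "z \<in> K j" using xy yz unfolding E_def by blast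
      moreover then have "i = j" using Kdisj by blast
      ultimately show ?thesis unfolding E_def by blast
    qed
  qed
  define G where "G = Gof E"
  have grp: "group G" unfolding G_def by (rule Gof_group[OF Er Es Et])
  have act: "group_action G UNIV (\<lambda>g. g)" unfolding G_def by (rule Gof_action[OF grp[unfolded G_def]])
  have orb: "(\<exists>g\<in>carrier G. g x = y) \<longleftrightarrow> E x y" for x y unfolding G_def by (rule Gof_orbit[OF Er Es Et])
  have key: "A \<notin> sets lebesgue \<and> turing_closure A \<notin> sets lebesgue" if sel: "is_selector G (\<lambda>g. g) A" for A
  proof -
    have s1: "\<forall>x. \<exists>v\<in>A. E x v" and s2: "\<forall>x\<in>A. \<forall>y\<in>A. x \<noteq> y \<longrightarrow> \<not> E x y"
      using sel unfolding is_selector_def orb by auto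
    define C where "C = turing_closure A"
    have AC: "A \<subseteq> C" unfolding C_def turing_closure_def using turing_equiv_refl by blast
    have qA: "q i \<in> A" for i
    proof -
      obtain v where v: "v \<in> A" "E (q i) v" using s1 by blast
      have "\<not> (\<exists>j. q i \<in> K j)" using gad[of i] unfolding K_def by blast
      then have "v = q i" using v(2) unfolding E_def by blast
      then show ?thesis using v(1) by simp
    qed
    have pC: "p1 i \<notin> C \<or> p2 i \<notin> C" for i
    proof (rule ccontr)
      assume "\<not> (p1 i \<notin> C \<or> p2 i \<notin> C)"
      then obtain a1 a2 where a: "a1 \<in> A" "R (p1 i) a1" "a2 \<in> A" "R (p2 i) a2"
        unfolding C_def turing_closure_def R_def by blast
      then have "a1 \<in> K i" "a2 \<in> K i" unfolding K_def by auto
      then have "E a1 a2" unfolding E_def by blast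
      then have "a1 = a2" using s2 a by blast
      then show False using gad[of i] a by blast
    qed
    have H: "P \<inter> X \<noteq> {} \<and> P - X \<noteq> {}" if h1: "closed P" and h2: "uncountable P" and h3: "A \<subseteq> X" and h4: "X \<subseteq> C" for P X
    proof -
      have "P \<in> F" using h1 h2 unfolding F_def by blast
      then obtain i where i: "\<tau> i = P" using \<tau>surj by blast
      have "q i \<in> P \<inter> X" using qA[of i] gad[of i] i h3 by blast
      moreover have "P - X \<noteq> {}" using pC[of i] gad[of i] i h4 by blast
      ultimately show ?thesis by blast
    qed
    have "A \<notin> sets lebesgue"
    proof (rule bernstein_nonmeasurable)
      fix P :: "real set" assume "closed P" "uncountable P"
      then show "P \<inter> A \<noteq> {} \<and> P - A \<noteq> {}" by (rule H) (use AC in auto)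
    qed
    moreover have "C \<notin> sets lebesgue"
    proof (rule bernstein_nonmeasurable)
      fix P :: "real set" assume "closed P" "uncountable P"
      then show "P \<inter> C \<noteq> {} \<and> P - C \<noteq> {}" by (rule H) (use AC in auto)
    qed
    ultimately show ?thesis unfolding C_def by blast
  qed
  have "paradoxical_action G (\<lambda>g. g)" unfolding paradoxical_action_def using key by blast
  then show ?thesis using grp act key by blast
qed


end
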